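(* Let $(a_k)_{k\ge1},(c_k)_{k\ge1}$ be real sequences with $\sum_{k\ge1}(a_k^2+c_k^2)<\infty$. Then $$\begin{aligned}F(a,c):=\sum_{k\ge1}\Big\{&a_k^2\Big(0.84+\frac1{k^2}-\frac1{(k-1)^2}\Big)+c_k^2\Big(0.84+\frac1{k(k+1)}\Big)+\frac{2a_ka_{k+1}}{(k+1)^2}+2a_k\sum_{j>k+1}a_j\Big(\frac1{j^2}-\frac1{(j-1)^2}\Big)\\&+2a_kc_k\frac{1+2k-k^2}{2k^2(k+1)}+2a_{k+1}c_k\frac{k^2-k-1}{2k^2(k+1)^2}-2a_{k+2}c_k\frac{k+2}{2(k+1)^2}+\sum_{j>k}\frac{2a_kc_j}{j(j+1)}\Big\}\ge0.\end{aligned}$$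
   Context: For $k=1$ the term $\frac{1}{(k-1)^2}$ is interpreted as $0$. *)

theory Defs
  imports Complex_Main
begin

text \<open>Sequences are functions nat => real; only indices k >= 1 are used.
  For k = 1 the term 1/(k-1)^2 is 1/0 = 0 in Isabelle, matching the convention.\<close>

definition tailA :: "(nat \<Rightarrow> real) \<Rightarrow> nat \<Rightarrow> real" where
  "tailA a k = (\<Sum>i. a (i + k + 2) * (1 / (real (i + k + 2))^2 - 1 / (real (i + k + 2) - 1)^2))"

definition tailC :: "(nat \<Rightarrow> real) \<Rightarrow> nat \<Rightarrow> real" where
  "tailC c k = (\<Sum>i. c (i + k + 1) / (real (i + k + 1) * (real (i + k + 1) + 1)))"

definition Fterm :: "(nat \<Rightarrow> real) \<Rightarrow> (nat \<Rightarrow> real) \<Rightarrow> nat \<Rightarrow> real" where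
  "Fterm a c k =
     (a k)^2 * (0.84 + 1 / (real k)^2 - 1 / (real k - 1)^2)
   + (c k)^2 * (0.84 + 1 / (real k * (real k + 1)))
   + 2 * a k * a (k + 1) / (real k + 1)^2
   + 2 * a k * tailA a k
   + 2 * a k * c k * ((1 + 2 * real k - (real k)^2) / (2 * (real k)^2 * (real k + 1)))
   + 2 * a (k + 1) * c k * (((real k)^2 - real k - 1) / (2 * (real k)^2 * (real k + 1)^2))
   - 2 * a (k + 2) * c k * ((real k + 2) / (2 * (real k + 1)^2))
   + 2 * a k * tailC c k"

end

theory Submission
  imports Defs
begin

definition Qf :: "real \<Rightarrow> real \<Rightarrow> real \<Rightarrow> real \<Rightarrow> real \<Rightarrow> real \<Rightarrow> real \<Rightarrow> real \<Rightarrow> real \<Rightarrow> real" where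
  "Qf p00 p11 p22 p01 p02 p12 u v r = p00*u^2 + p11*v^2 + p22*r^2 + 2*p01*u*v + 2*p02*u*r + 2*p12*v*r"

definition Fg :: "real \<Rightarrow> real \<Rightarrow> real \<Rightarrow> real \<Rightarrow> real \<Rightarrow> real \<Rightarrow> real \<Rightarrow> real \<Rightarrow> real \<Rightarrow> real \<Rightarrow> real \<Rightarrow> real" where
  "Fg al be ga p q r x0 x1 x2 x3 x4 = al*x0^2 + be*x1^2 + 2*ga*x0*x2 + 2*x0*x4 + 2*p*x0*x1 + 2*q*x2*x1 - 2*r*x3*x1"

definition Quad5 :: "real \<Rightarrow> real \<Rightarrow> real \<Rightarrow> real \<Rightarrow> real \<Rightarrow> real \<Rightarrow> real \<Rightarrow> real \<Rightarrow> real \<Rightarrow> real \<Rightarrow> real \<Rightarrow> real \<Rightarrow> real \<Rightarrow> real \<Rightarrow> real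
   \<Rightarrow> real \<Rightarrow> real \<Rightarrow> real \<Rightarrow> real \<Rightarrow> real \<Rightarrow> real" where
  "Quad5 m00 m11 m22 m33 m44 m01 m02 m03 m04 m12 m13 m14 m23 m24 m34 x0 x1 x2 x3 x4 =
     m00*x0^2 + m11*x1^2 + m22*x2^2 + m33*x3^2 + m44*x4^2
     + 2*m01*x0*x1 + 2*m02*x0*x2 + 2*m03*x0*x3 + 2*m04*x0*x4
     + 2*m12*x1*x2 + 2*m13*x1*x3 + 2*m14*x1*x4
     + 2*m23*x2*x3 + 2*m24*x2*x4 + 2*m34*x3*x4"

lemma step_ident:
  "Fg al be ga p q r x0 x1 x2 x3 x4 + Qf P00 P11 P22 P01 P02 P12 x0 x2 (x4 + w*x1 + d*x2)
     - Qf Q00 Q11 Q22 Q01 Q02 Q12 x2 x3 x4 =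
   Quad5 (al + P00) (be + P22*w^2) (P11 + P22*d^2 + 2*P12*d - Q00) (-Q11) (P22 - Q22)
     (p + P02*w) (ga + P01 + P02*d) 0 (1 + P02)
     (q + P22*w*d + P12*w) (-r) (P22*w)
     (-Q01) (P22*d + P12 - Q02) (-Q12) x0 x1 x2 x3 x4"
  unfolding Fg_def Qf_def Quad5_def by (simp add: power2_eq_square algebra_simps)

lemma ldl5:
  assumes "m00 = d0" "m01 = d0*l01" "m02 = d0*l02" "m03 = d0*l03" "m04 = d0*l04"
    "m11 = d0*l01^2 + d1" "m12 = d0*l01*l02 + d1*l12" "m13 = d0*l01*l03 + d1*l13" "m14 = d0*l01*l04 + d1*l14"
    "m22 = d0*l02^2 + d1*l12^2 + d2" "m23 = d0*l02*l03 + d1*l12*l13 + d2*l23"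
    "m24 = d0*l02*l04 + d1*l12*l14 + d2*l24"
    "m33 = d0*l03^2 + d1*l13^2 + d2*l23^2 + d3"
    "m34 = d0*l03*l04 + d1*l13*l14 + d2*l23*l24 + d3*l34"
    "m44 = d0*l04^2 + d1*l14^2 + d2*l24^2 + d3*l34^2 + d4"
    "0 \<le> d0" "0 \<le> d1" "0 \<le> d2" "0 \<le> d3" "0 \<le> d4"
  shows "0 \<le> Quad5 m00 m11 m22 m33 m44 m01 m02 m03 m04 m12 m13 m14 m23 m24 m34 x0 x1 x2 x3 x4"
proof -
  have "Quad5 m00 m11 m22 m33 m44 m01 m02 m03 m04 m12 m13 m14 m23 m24 m34 x0 x1 x2 x3 x4 =
     d0*(x0 + l01*x1 + l02*x2 + l03*x3 + l04*x4)^2 + d1*(x1 + l12*x2 + l13*x3 + l14*x4)^2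
     + d2*(x2 + l23*x3 + l24*x4)^2 + d3*(x3 + l34*x4)^2 + d4*x4^2"
    unfolding Quad5_def assms(1-15) by (simp add: power2_eq_square algebra_simps)
  also have "\<dots> \<ge> 0" using assms(16-20) by (intro add_nonneg_nonneg mult_nonneg_nonneg) simp_all
  finally show ?thesis .
qed

lemma step_ldl:
  assumes "al + P00 = dA" "p + P02*w = dA*lAB" "ga + P01 + P02*d = dA*lAC" "0 = dA*lAD" "1 + P02 = dA*lAE"
    "be + P22*w^2 = dA*lAB^2 + dB" "q + P22*w*d + P12*w = dA*lAB*lAC + dB*lBC" "-r = dA*lAB*lAD + dB*lBD"
    "P22*w = dA*lAB*lAE + dB*lBE"
    "P11 + P22*d^2 + 2*P12*d - Q00 = dA*lAC^2 + dB*lBC^2 + dC" "-Q01 = dA*lAC*lAD + dB*lBC*lBD + dC*lCD"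
    "P22*d + P12 - Q02 = dA*lAC*lAE + dB*lBC*lBE + dC*lCE"
    "-Q11 = dA*lAD^2 + dB*lBD^2 + dC*lCD^2 + dD"
    "-Q12 = dA*lAD*lAE + dB*lBD*lBE + dC*lCD*lCE + dD*lDE"
    "P22 - Q22 = dA*lAE^2 + dB*lBE^2 + dC*lCE^2 + dD*lDE^2 + dE"
    "0 \<le> dA" "0 \<le> dB" "0 \<le> dC" "0 \<le> dD" "0 \<le> dE"
  shows "0 \<le> Fg al be ga p q r x0 x1 x2 x3 x4 + Qf P00 P11 P22 P01 P02 P12 x0 x2 (x4 + w*x1 + d*x2)
     - Qf Q00 Q11 Q22 Q01 Q02 Q12 x2 x3 x4"
  unfolding step_ident by (rule ldl5[OF assms])

lemma pair_bound: "- (\<bar>m::real\<bar> * (x^2 + y^2)) \<le> 2*m*x*y"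
proof -
  have "0 \<le> \<bar>m\<bar> * (\<bar>x\<bar> - \<bar>y\<bar>)^2" by simp
  moreover have "\<bar>2*m*x*y\<bar> = 2*\<bar>m\<bar>*\<bar>x\<bar>*\<bar>y\<bar>" by (simp add: abs_mult)
  moreover have "x^2 = \<bar>x\<bar>^2" "y^2 = \<bar>y\<bar>^2" by simp_all
  ultimately show ?thesis by (simp add: power2_eq_square algebra_simps) (smt (verit))
qed

lemma pair_bound_s: assumes "(s::real) > 0" shows "- (\<bar>m\<bar> * (s*x^2 + y^2/s)) \<le> 2*m*x*y"
proof -
  have "- (\<bar>m\<bar> * ((sqrt s * x)^2 + (y / sqrt s)^2)) \<le> 2*m*(sqrt s * x)*(y / sqrt s)"
    by (rule pair_bound)
  moreover have "(sqrt s * x)^2 = s*x^2" "(y / sqrt s)^2 = y^2/s" using assms by (simp_all add: power_mult_distrib power_divide)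
  moreover have "2*m*(sqrt s * x)*(y / sqrt s) = 2*m*x*y" using assms by simp
  ultimately show ?thesis by simp
qed

lemma gersh5:
  assumes s: "s > 0"
    and r0: "\<bar>m01\<bar> + \<bar>m02\<bar> + \<bar>m03\<bar> + s*\<bar>m04\<bar> \<le> m00"
    and r1: "\<bar>m01\<bar> + \<bar>m12\<bar> + \<bar>m13\<bar> + s*\<bar>m14\<bar> \<le> m11"
    and r2: "\<bar>m02\<bar> + \<bar>m12\<bar> + \<bar>m23\<bar> + s*\<bar>m24\<bar> \<le> m22"
    and r3: "\<bar>m03\<bar> + \<bar>m13\<bar> + \<bar>m23\<bar> + s*\<bar>m34\<bar> \<le> m33"
    and r4: "\<bar>m04\<bar> + \<bar>m14\<bar> + \<bar>m24\<bar> + \<bar>m34\<bar> \<le> s*m44"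
  shows "0 \<le> Quad5 m00 m11 m22 m33 m44 m01 m02 m03 m04 m12 m13 m14 m23 m24 m34 x0 x1 x2 x3 x4"
proof -
  have b01: "- (\<bar>m01\<bar> * (x0^2 + x1^2)) \<le> 2*m01*x0*x1" by (rule pair_bound)
  have b02: "- (\<bar>m02\<bar> * (x0^2 + x2^2)) \<le> 2*m02*x0*x2" by (rule pair_bound)
  have b03: "- (\<bar>m03\<bar> * (x0^2 + x3^2)) \<le> 2*m03*x0*x3" by (rule pair_bound)
  have b12: "- (\<bar>m12\<bar> * (x1^2 + x2^2)) \<le> 2*m12*x1*x2" by (rule pair_bound)
  have b13: "- (\<bar>m13\<bar> * (x1^2 + x3^2)) \<le> 2*m13*x1*x3" by (rule pair_bound)
  have b23: "- (\<bar>m23\<bar> * (x2^2 + x3^2)) \<le> 2*m23*x2*x3" by (rule pair_bound)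
  have b04: "- (\<bar>m04\<bar> * (s*x0^2 + x4^2/s)) \<le> 2*m04*x0*x4" by (rule pair_bound_s[OF s])
  have b14: "- (\<bar>m14\<bar> * (s*x1^2 + x4^2/s)) \<le> 2*m14*x1*x4" by (rule pair_bound_s[OF s])
  have b24: "- (\<bar>m24\<bar> * (s*x2^2 + x4^2/s)) \<le> 2*m24*x2*x4" by (rule pair_bound_s[OF s])
  have b34: "- (\<bar>m34\<bar> * (s*x3^2 + x4^2/s)) \<le> 2*m34*x3*x4" by (rule pair_bound_s[OF s])
  have c0: "(\<bar>m01\<bar> + \<bar>m02\<bar> + \<bar>m03\<bar> + s*\<bar>m04\<bar>) * x0^2 \<le> m00 * x0^2"
    by (rule mult_right_mono[OF r0]) simp
  have c1: "(\<bar>m01\<bar> + \<bar>m12\<bar> + \<bar>m13\<bar> + s*\<bar>m14\<bar>) * x1^2 \<le> m11 * x1^2"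
    by (rule mult_right_mono[OF r1]) simp
  have c2: "(\<bar>m02\<bar> + \<bar>m12\<bar> + \<bar>m23\<bar> + s*\<bar>m24\<bar>) * x2^2 \<le> m22 * x2^2"
    by (rule mult_right_mono[OF r2]) simp
  have c3: "(\<bar>m03\<bar> + \<bar>m13\<bar> + \<bar>m23\<bar> + s*\<bar>m34\<bar>) * x3^2 \<le> m33 * x3^2"
    by (rule mult_right_mono[OF r3]) simp
  have r4': "(\<bar>m04\<bar> + \<bar>m14\<bar> + \<bar>m24\<bar> + \<bar>m34\<bar>) / s \<le> m44"
    using r4 s by (simp add: divide_le_eq mult.commute)
  have c4: "((\<bar>m04\<bar> + \<bar>m14\<bar> + \<bar>m24\<bar> + \<bar>m34\<bar>) / s) * x4^2 \<le> m44 * x4^2"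
    by (rule mult_right_mono[OF r4']) simp
  show ?thesis using b01 b02 b03 b12 b13 b23 b04 b14 b24 b34 c0 c1 c2 c3 c4
    unfolding Quad5_def by (simp add: algebra_simps add_divide_distrib)
qed

definition al :: "real \<Rightarrow> real" where "al k = 0.84 + 1 / k^2 - 1 / (k - 1)^2"
definition be :: "real \<Rightarrow> real" where "be k = 0.84 + 1 / (k * (k + 1))"
definition ga :: "real \<Rightarrow> real" where "ga k = 1 / (k + 1)^2"
definition pp :: "real \<Rightarrow> real" where "pp k = (1 + 2 * k - k^2) / (2 * k^2 * (k + 1))"
definition qq :: "real \<Rightarrow> real" where "qq k = (k^2 - k - 1) / (2 * k^2 * (k + 1)^2)"
definition rr :: "real \<Rightarrow> real" where "rr k = (k + 2) / (2 * (k + 1)^2)"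
definition ww :: "real \<Rightarrow> real" where "ww k = 1 / (k * (k + 1))"
definition dd :: "real \<Rightarrow> real" where "dd k = 1 / (k + 1)^2 - 1 / k^2"
lemmas coef_defs = al_def be_def ga_def pp_def qq_def rr_def ww_def dd_def

definition Phi :: "nat \<Rightarrow> real \<Rightarrow> real \<Rightarrow> real \<Rightarrow> real" where
  "Phi j = (if j = 0 then Qf 0 0 0 0 0 0
    else if j = 1 then Qf (-(16223/250000)) (-(116797/1000000)) (-(302409/500000)) (-(12017/200000)) (-(17941/100000)) (-(84627/1000000))
    else if j = 2 then Qf (-(335161/1000000)) (-(50179/1000000)) (-(27663237/1000000)) (-(2461/500000)) (-(2493411/1000000)) (-(109561/1000000))
    else if j = 3 then Qf (-(287843/1000000)) (-(42133/1000000)) (-(52168537/1000000)) (31727/500000) (1645681/500000) (-(440309/500000))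
    else if j = 4 then Qf (-(15633/500000)) (-(493/25000)) (-(10685811/100000)) (877/250000) (148973/1000000) (-(149389/250000))
    else if j = 5 then Qf (-(23887/1000000)) (-(12573/1000000)) (-(124829153/1000000)) (2309/500000) (207927/250000) (-(452391/1000000))
    else if j = 6 then Qf (-(6821/500000)) (-(4211/500000)) (-(139717333/1000000)) (2057/1000000) (124473/250000) (-(300193/1000000))
    else if j = 7 then Qf (-(2319/250000)) (-(61/10000)) (-(74871567/500000)) (1191/1000000) (76263/200000) (-(10531/50000))
    else Qf (- 2 / real j) (- 3 / (5 * real j)) (- (175 + 15 * (real j - 8))) 0 0 0)"

lemma phi_0: "Phi 0 = Qf 0 0 0 0 0 0" by (simp add: Phi_def)
lemma phi_1: "Phi 1 = Qf (-(16223/250000)) (-(116797/1000000)) (-(302409/500000)) (-(12017/200000)) (-(17941/100000)) (-(84627/1000000))" by (simp add: Phi_def)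
lemma phi_2: "Phi 2 = Qf (-(335161/1000000)) (-(50179/1000000)) (-(27663237/1000000)) (-(2461/500000)) (-(2493411/1000000)) (-(109561/1000000))" by (simp add: Phi_def)
lemma phi_3: "Phi 3 = Qf (-(287843/1000000)) (-(42133/1000000)) (-(52168537/1000000)) (31727/500000) (1645681/500000) (-(440309/500000))" by (simp add: Phi_def)
lemma phi_4: "Phi 4 = Qf (-(15633/500000)) (-(493/25000)) (-(10685811/100000)) (877/250000) (148973/1000000) (-(149389/250000))" by (simp add: Phi_def)
lemma phi_5: "Phi 5 = Qf (-(23887/1000000)) (-(12573/1000000)) (-(124829153/1000000)) (2309/500000) (207927/250000) (-(452391/1000000))" by (simp add: Phi_def)
lemma phi_6: "Phi 6 = Qf (-(6821/500000)) (-(4211/500000)) (-(139717333/1000000)) (2057/1000000) (124473/250000) (-(300193/1000000))" by (simp add: Phi_def)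
lemma phi_7: "Phi 7 = Qf (-(2319/250000)) (-(61/10000)) (-(74871567/500000)) (1191/1000000) (76263/200000) (-(10531/50000))" by (simp add: Phi_def)
lemma phi_ge8: "j \<ge> 8 \<Longrightarrow> Phi j = Qf (- 2 / real j) (- 3 / (5 * real j)) (- (175 + 15 * (real j - 8))) 0 0 0" by (simp add: Phi_def)

lemma head1:
  "0 \<le> Fg (al 1) (be 1) (ga 1) (pp 1) (qq 1) (rr 1) x0 x1 x2 x3 x4 + Phi 0 x0 x2 (x4 + ww 1 * x1 + dd 1 * x2) - Phi 1 x2 x3 x4"
  unfolding phi_0 phi_1
  by (rule step_ldl[where dA = "(46/25)" and dB = "(5539/4600)" and dC = "(15447/1384750000)" and dD = "(708761/61788000000)" and dE = "(5554823/354380500000)" and lAB = "(25/92)" and lAC = "(25/184)" and lAD = "(0)" and lAE = "(25/46)" and lBC = "(-(1775/11078))" and lBD = "(-(1725/5539))" and lBE = "(-(1250/5539))" and lCD = "(-(1685/61788))" and lCE = "(995/30894)" and lDE = "(-(11074/708761))"]) (simp_all add: coef_defs power2_eq_square)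

lemma head2:
  "0 \<le> Fg (al 2) (be 2) (ga 2) (pp 2) (qq 2) (rr 2) x0 x1 x2 x3 x4 + Phi 1 x0 x2 (x4 + ww 2 * x1 + dd 2 * x2) - Phi 2 x2 x3 x4"
  unfolding phi_1 phi_2
  by (rule step_ldl[where dA = "(6277/250000)" and dB = "(74145433463/75324000000)" and dC = "(53407192307209/4003853407002000000)" and dD = "(1813495032400729/160221576921627000000)" and dE = "(16288725627434253/56671719762522781250)" and lAB = "(11765/25108)" and lAC = "(455665/150648)" and lAD = "(0)" and lAE = "(410295/12554)" and lBC = "(-(9852736013/444872600778))" and lBD = "(-(50216000000/222436300389))" and lBE = "(-(36555609222/74145433463))" and lCD = "(1494443263844/53407192307209)" and lCE = "(-(121184339706/4108245562093))" and lDE = "(-(43356514339905/1813495032400729))"]) (simp_all add: coef_defs power2_eq_square)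

lemma head3:
  "0 \<le> Fg (al 3) (be 3) (ga 3) (pp 3) (qq 3) (rr 3) x0 x1 x2 x3 x4 + Phi 2 x0 x2 (x4 + ww 3 * x1 + dd 3 * x2) - Phi 3 x2 x3 x4"
  unfolding phi_2 phi_3
  by (rule step_ldl[where dA = "(3293551/9000000)" and dB = "(68721476835281/118567836000000)" and dC = "(31576392907962289/2473973166070116000000)" and dD = "(82635176710040839/7894098226990572250000)" and dE = "(22000075289943243519/41317588355020419500000)" and lAB = "(-(8480233/13174204))" and lAC = "(25745109/52696816)" and lAD = "(0)" and lAE = "(-(13440699/3293551))" and lBC = "(111632535771943/274885907341124)" and lBD = "(-(18526224375000/68721476835281))" and lBE = "(-(387311104856628/68721476835281))" and lCD = "(-(239850518296914/31576392907962289))" and lCE = "(-(1120683164677992/31576392907962289))" and lDE = "(2094653241511367/165270353420081678)"]) (simp_all add: coef_defs power2_eq_square)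

lemma head4:
  "0 \<le> Fg (al 4) (be 4) (ga 4) (pp 4) (qq 4) (rr 4) x0 x1 x2 x3 x4 + Phi 3 x0 x2 (x4 + ww 4 * x1 + dd 4 * x2) - Phi 4 x2 x3 x4"
  unfolding phi_3 phi_4
  by (rule step_ldl[where dA = "(4531913/9000000)" and dB = "(1324388509143323/1812765200000000)" and dC = "(52605697026650117/5297554036573292000000)" and dD = "(65036844409797069/6575712128331264625000)" and dE = "(4387261516681645553/4064802775612316812500)" and lAB = "(10873629/45319130)" and lAC = "(52917039/906382600)" and lAD = "(0)" and lAE = "(38622258/4531913)" and lBC = "(774232759913693/26487770182866460)" and lBD = "(-(217531824000000/1324388509143323))" and lBE = "(-(6594972552133540/1324388509143323))" and lCD = "(-(2233322370476336/52605697026650117))" and lCE = "(658815037500884/52605697026650117)" and lDE = "(-(3965064128462219/130073688819594138))"]) (simp_all add: coef_defs power2_eq_square)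

lemma head5:
  "0 \<le> Fg (al 5) (be 5) (ga 5) (pp 5) (qq 5) (rr 5) x0 x1 x2 x3 x4 + Phi 4 x0 x2 (x4 + ww 5 * x1 + dd 5 * x2) - Phi 5 x2 x3 x4"
  unfolding phi_4 phi_5
  by (rule step_ldl[where dA = "(393117/500000)" and dB = "(19718495414353/26207800000000)" and dC = "(3108211362957211/319439625712518600000)" and dD = "(4253710019351531741/419608533999223485000000)" and dE = "(334554615563229276349/265856876209470733812500)" and lAB = "(-(139003/2620780))" and lAC = "(8839499/235870200)" and lAD = "(0)" and lAE = "(382991/262078)" and lBC = "(84287261987551/1774664587291770)" and lBD = "(-(22931825000000/177466458729177))" and lBE = "(-(91753425569410/19718495414353))" and lCD = "(-(725533791341974/15541056814786055))" and lCE = "(-(776703016568844/15541056814786055))" and lDE = "(-(53604685692380349/4253710019351531741))"]) (simp_all add: coef_defs power2_eq_square)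

lemma head6:
  "0 \<le> Fg (al 6) (be 6) (ga 6) (pp 6) (qq 6) (rr 6) x0 x1 x2 x3 x4 + Phi 5 x0 x2 (x4 + ww 6 * x1 + dd 6 * x2) - Phi 6 x2 x3 x4"
  unfolding phi_5 phi_6
  by (rule step_ldl[where dA = "(7235017/9000000)" and dB = "(3370231414031341/4254189996000000)" and dC = "(204781271549454357067/20064672723435588643500000)" and dD = "(2019220076111904769239817/196671933196095964527146800000)" and dE = "(14200585252953759044444325651/10096100380559523846199085000000)" and lAB = "(-(1627438/50645119))" and lAC = "(8333487/354515833)" and lAD = "(0)" and lAE = "(16485372/7235017)" and lBC = "(10698780728207849/424649158167948966)" and lBD = "(-(347280816000000/3370231414031341))" and lBE = "(-(12393571355563678/3370231414031341))" and lCD = "(-(88285766274235755513/2866937801692360998938))" and lCE = "(5540678253178755498/204781271549454357067)" and lDE = "(-(59267954338801961931766/10096100380559523846199085))"]) (simp_all add: coef_defs power2_eq_square)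

lemma head7:
  "0 \<le> Fg (al 7) (be 7) (ga 7) (pp 7) (qq 7) (rr 7) x0 x1 x2 x3 x4 + Phi 6 x0 x2 (x4 + ww 7 * x1 + dd 7 * x2) - Phi 7 x2 x3 x4"
  unfolding phi_6 phi_7
  by (rule step_ldl[where dA = "(180586939/220500000)" and dB = "(459769162449818401/566320640704000000)" and dC = "(3258468447573515067077/315401645440575423086000000)" and dD = "(4342341883246969581584377/417083961289409928585856000000)" and dE = "(3272578971164112186094663959/2171170941623484790792188500000)" and lAB = "(-(30408201/722347756))" and lAC = "(107960337/5778782048)" and lAD = "(0)" and lAE = "(330285186/180586939)" and lBC = "(62314571832015463/3678153299598547208)" and lBD = "(-(39819420049500000/459769162449818401))" and lBE = "(-(1377233237942329544/459769162449818401))" and lCD = "(557547952068216977217/26067747580588120536616)" and lCE = "(-(116170761266459073090/3258468447573515067077))" and lDE = "(-(115595355976996709683600/4342341883246969581584377))"]) (simp_all add: coef_defs power2_eq_square)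

lemma head8:
  "0 \<le> Fg (al 8) (be 8) (ga 8) (pp 8) (qq 8) (rr 8) x0 x1 x2 x3 x4 + Phi 7 x0 x2 (x4 + ww 8 * x1 + dd 8 * x2) - Phi 8 x2 x3 x4"
  unfolding phi_7 phi_ge8[of 8, simplified]
  by (rule step_ldl[where dA = "(40471101/49000000)" and dB = "(172767317336432441/209802187584000000)" and dC = "(435942929718885313054080703/1791251546144131548288000000)" and dD = "(8051021879215204698313470477149/114408862475424261557912939695320)" and dE = "(3487960068332678725215643224418811/201275546980380117457836761928725)" and lAB = "(-(125253065/2913919272))" and lAC = "(3120897661/209802187584)" and lAD = "(0)" and lAE = "(67684435/40471101)" and lBC = "(146946416521540283/12439246848223135752)" and lBD = "(-(12950752320000000/172767317336432441))" and lBE = "(-(423882400513684248/172767317336432441))" and lCD = "(11755713321723222640000000/3923486367469967817486726327)" and lCE = "(508277089291584742041960000/435942929718885313054080703)" and lDE = "(-(17424472746894017899394123020800/8051021879215204698313470477149))"]) (simp_all add: coef_defs power2_eq_square)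



lemma row_r0:
  fixes k :: real assumes "9 \<le> k"
  shows "-pp k + ga k + 1/4 \<le> al k - 2/(k-1)"
proof -
  define t where "t = k - 9"
  have t: "0 \<le> t" "k = t + 9" using assms by (simp_all add: t_def)
  have nz: "k \<noteq> 0" "k + 1 \<noteq> 0" "k - 1 \<noteq> 0" "1 + k \<noteq> 0" using assms by auto
  have e: "(al k - 2/(k-1)) - (-pp k + ga k + 1/4) = ((149532) * t^0 + (598156/5) * t^1 + (964699/25) * t^2 + (162068/25) * t^3 + (60167/100) * t^4 + (734/25) * t^5 + (59/100) * t^6) / (k^2 * (k+1)^2 * (k-1)^2)"
    unfolding t_def using nz by (simp add: coef_defs divide_simps; simp add: algebra_simps eval_nat_numeral)
  have "0 \<le> (149532) * t^0 + (598156/5) * t^1 + (964699/25) * t^2 + (162068/25) * t^3 + (60167/100) * t^4 + (734/25) * t^5 + (59/100) * t^6" using t(1) by (intro add_nonneg_nonneg mult_nonneg_nonneg zero_le_power) simp_all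
  moreover have "0 < k^2 * (k+1)^2 * (k-1)^2" using assms by simp
  ultimately have "0 \<le> ((149532) * t^0 + (598156/5) * t^1 + (964699/25) * t^2 + (162068/25) * t^3 + (60167/100) * t^4 + (734/25) * t^5 + (59/100) * t^6) / (k^2 * (k+1)^2 * (k-1)^2)" by simp
  then show ?thesis using e by simp
qed

lemma row_r1:
  fixes k :: real assumes "9 \<le> k"
  shows "-pp k + (qq k - (15*k+40) * ww k * dd k) + rr k + (15*k+40) * ww k / 4 \<le> be k - (15*k+40) * (ww k)^2"
proof -
  define t where "t = k - 9"
  have t: "0 \<le> t" "k = t + 9" using assms by (simp_all add: t_def)
  have nz: "k \<noteq> 0" "k + 1 \<noteq> 0" "k - 1 \<noteq> 0" "1 + k \<noteq> 0" using assms by auto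
  have e: "(be k - (15*k+40) * (ww k)^2) - (-pp k + (qq k - (15*k+40) * ww k * dd k) + rr k + (15*k+40) * ww k / 4) = ((15823800) * t^0 + (18424490) * t^1 + (17090571/2) * t^2 + (42939837/20) * t^3 + (8144496/25) * t^4 + (1544677/50) * t^5 + (89967/50) * t^6 + (5909/100) * t^7 + (21/25) * t^8) / (k^4 * (k+1)^4)"
    unfolding t_def using nz by (simp add: coef_defs divide_simps; simp add: algebra_simps eval_nat_numeral)
  have "0 \<le> (15823800) * t^0 + (18424490) * t^1 + (17090571/2) * t^2 + (42939837/20) * t^3 + (8144496/25) * t^4 + (1544677/50) * t^5 + (89967/50) * t^6 + (5909/100) * t^7 + (21/25) * t^8" using t(1) by (intro add_nonneg_nonneg mult_nonneg_nonneg zero_le_power) simp_all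
  moreover have "0 < k^4 * (k+1)^4" using assms by simp
  ultimately have "0 \<le> ((15823800) * t^0 + (18424490) * t^1 + (17090571/2) * t^2 + (42939837/20) * t^3 + (8144496/25) * t^4 + (1544677/50) * t^5 + (89967/50) * t^6 + (5909/100) * t^7 + (21/25) * t^8) / (k^4 * (k+1)^4)" by simp
  then show ?thesis using e by simp
qed

lemma row_r2:
  fixes k :: real assumes "9 \<le> k"
  shows "ga k + (qq k - (15*k+40) * ww k * dd k) + (15*k+40) * (- dd k) / 4 \<le> 2/k - 3/(5*(k-1)) - (15*k+40) * (dd k)^2"
proof -
  define t where "t = k - 9"
  have t: "0 \<le> t" "k = t + 9" using assms by (simp_all add: t_def)
  have nz: "k \<noteq> 0" "k + 1 \<noteq> 0" "k - 1 \<noteq> 0" "1 + k \<noteq> 0" using assms by auto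
  have e: "(2/k - 3/(5*(k-1)) - (15*k+40) * (dd k)^2) - (ga k + (qq k - (15*k+40) * ww k * dd k) + (15*k+40) * (- dd k) / 4) = ((12960400) * t^0 + (19787440) * t^1 + (10492228) * t^2 + (11484721/4) * t^3 + (9273073/20) * t^4 + (923763/20) * t^5 + (56063/20) * t^6 + (477/5) * t^7 + (7/5) * t^8) / (k^4 * (k+1)^4 * (k-1)^1)"
    unfolding t_def using nz by (simp add: coef_defs divide_simps; simp add: algebra_simps eval_nat_numeral)
  have "0 \<le> (12960400) * t^0 + (19787440) * t^1 + (10492228) * t^2 + (11484721/4) * t^3 + (9273073/20) * t^4 + (923763/20) * t^5 + (56063/20) * t^6 + (477/5) * t^7 + (7/5) * t^8" using t(1) by (intro add_nonneg_nonneg mult_nonneg_nonneg zero_le_power) simp_all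
  moreover have "0 < k^4 * (k+1)^4 * (k-1)^1" using assms by simp
  ultimately have "0 \<le> ((12960400) * t^0 + (19787440) * t^1 + (10492228) * t^2 + (11484721/4) * t^3 + (9273073/20) * t^4 + (923763/20) * t^5 + (56063/20) * t^6 + (477/5) * t^7 + (7/5) * t^8) / (k^4 * (k+1)^4 * (k-1)^1)" by simp
  then show ?thesis using e by simp
qed

lemma row_r3:
  fixes k :: real assumes "9 \<le> k"
  shows "rr k \<le> 3/(5*k)"
proof -
  define t where "t = k - 9"
  have t: "0 \<le> t" "k = t + 9" using assms by (simp_all add: t_def)
  have nz: "k \<noteq> 0" "k + 1 \<noteq> 0" "k - 1 \<noteq> 0" "1 + k \<noteq> 0" using assms by auto
  have e: "(3/(5*k)) - (rr k) = ((21/2) * t^0 + (2) * t^1 + (1/10) * t^2) / (k^1 * (k+1)^2)"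
    unfolding t_def using nz by (simp add: coef_defs divide_simps; simp add: algebra_simps eval_nat_numeral)
  have "0 \<le> (21/2) * t^0 + (2) * t^1 + (1/10) * t^2" using t(1) by (intro add_nonneg_nonneg mult_nonneg_nonneg zero_le_power) simp_all
  moreover have "0 < k^1 * (k+1)^2" using assms by simp
  ultimately have "0 \<le> ((21/2) * t^0 + (2) * t^1 + (1/10) * t^2) / (k^1 * (k+1)^2)" by simp
  then show ?thesis using e by simp
qed

lemma row_r4:
  fixes k :: real assumes "9 \<le> k"
  shows "1 + (15*k+40) * ww k + (15*k+40) * (- dd k) \<le> 15/4"
proof -
  define t where "t = k - 9"
  have t: "0 \<le> t" "k = t + 9" using assms by (simp_all add: t_def)
  have nz: "k \<noteq> 0" "k + 1 \<noteq> 0" "k - 1 \<noteq> 0" "1 + k \<noteq> 0" using assms by auto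
  have e: "(15/4) - (1 + (15*k+40) * ww k + (15*k+40) * (- dd k)) = ((3200) * t^0 + (4095) * t^1 + (3991/4) * t^2 + (179/2) * t^3 + (11/4) * t^4) / (k^2 * (k+1)^2)"
    unfolding t_def using nz by (simp add: coef_defs divide_simps; simp add: algebra_simps eval_nat_numeral)
  have "0 \<le> (3200) * t^0 + (4095) * t^1 + (3991/4) * t^2 + (179/2) * t^3 + (11/4) * t^4" using t(1) by (intro add_nonneg_nonneg mult_nonneg_nonneg zero_le_power) simp_all
  moreover have "0 < k^2 * (k+1)^2" using assms by simp
  ultimately have "0 \<le> ((3200) * t^0 + (4095) * t^1 + (3991/4) * t^2 + (179/2) * t^3 + (11/4) * t^4) / (k^2 * (k+1)^2)" by simp
  then show ?thesis using e by simp
qed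


lemma tail_step:
  fixes k :: real assumes k9: "9 \<le> k"
  shows "0 \<le> Fg (al k) (be k) (ga k) (pp k) (qq k) (rr k) x0 x1 x2 x3 x4
     + Qf (-2/(k-1)) (-3/(5*(k-1))) (-(15*k+40)) 0 0 0 x0 x2 (x4 + ww k*x1 + dd k*x2)
     - Qf (-2/k) (-3/(5*k)) (-(15*k+55)) 0 0 0 x2 x3 x4"
proof -
  have kp: "0 < k" using k9 by simp
  have "1 + 2 * k - k^2 \<le> 0"
  proof -
    have "k * 3 \<le> k * k" using k9 kp by (intro mult_left_mono) auto
    then show ?thesis unfolding power2_eq_square using k9 by linarith
  qed
  then have s1: "pp k \<le> 0" unfolding pp_def using kp by (intro divide_nonpos_pos) auto
  have s2: "0 \<le> ga k" unfolding ga_def by simp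
  have "k * 2 \<le> k * k" using k9 kp by (intro mult_left_mono) auto
  then have "0 \<le> k^2 - k - 1" unfolding power2_eq_square using k9 by linarith
  then have s3: "0 \<le> qq k" unfolding qq_def using kp by (intro divide_nonneg_pos) auto
  have "1 / (k + 1)^2 < 1 / k^2" using kp by (intro divide_strict_left_mono power_strict_mono) auto
  then have s4: "dd k < 0" unfolding dd_def by simp
  have s5: "0 < ww k" unfolding ww_def using kp by simp
  have s6: "0 \<le> rr k" unfolding rr_def using kp by simp
  have p1: "0 < 15 * k + 40" using kp by simp
  have m12: "0 \<le> (15 * k + 40) * (ww k * (- dd k))" using p1 s4 s5 by (intro mult_nonneg_nonneg) auto
  have e12: "\<bar>qq k + (- (15 * k) - 40) * ww k * dd k\<bar> = qq k - (15 * k + 40) * ww k * dd k"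
    using s3 m12 by (simp add: algebra_simps)
  have e14: "\<bar>(- (15 * k) - 40) * ww k\<bar> = (15 * k + 40) * ww k"
    using p1 s5 by (simp add: abs_mult)
  have e24: "\<bar>(- (15 * k) - 40) * dd k\<bar> = (15 * k + 40) * (- dd k)"
    using p1 s4 by (simp add: abs_mult)
  have e1: "\<bar>pp k\<bar> = - pp k" using s1 by simp
  have e2: "\<bar>ga k\<bar> = ga k" "\<bar>rr k\<bar> = rr k" using s2 s6 by simp_all
  show ?thesis unfolding step_ident
    apply (rule gersh5[where s="1/4"])
    apply simp_all
    unfolding e12 e14 e24 e1 e2
    using row_r0[OF k9] row_r1[OF k9] row_r2[OF k9] row_r3[OF k9] row_r4[OF k9]
    apply (simp_all add: algebra_simps)
    done
qed

lemma step_all: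
  fixes n :: nat assumes n1: "1 \<le> n"
  shows "0 \<le> Fg (al (real n)) (be (real n)) (ga (real n)) (pp (real n)) (qq (real n)) (rr (real n)) x0 x1 x2 x3 x4
     + Phi (n - 1) x0 x2 (x4 + ww (real n) * x1 + dd (real n) * x2) - Phi n x2 x3 x4"
proof (cases "n \<le> 8")
  case True
  then have "n = 1 \<or> n = 2 \<or> n = 3 \<or> n = 4 \<or> n = 5 \<or> n = 6 \<or> n = 7 \<or> n = 8" using n1 by auto
  then show ?thesis using head1 head2 head3 head4 head5 head6 head7 head8 by (elim disjE) simp_all
next
  case False
  then have k9: "9 \<le> real n" by simp
  have a1: "real (n - 1) = real n - 1" using n1 by (simp add: of_nat_diff)
  have e1: "Phi (n - 1) = Qf (-2/(real n - 1)) (-3/(5*(real n - 1))) (-(15*real n+40)) 0 0 0"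
  proof -
    have "Phi (n - 1) = Qf (- 2 / real (n - 1)) (- 3 / (5 * real (n - 1))) (- (175 + 15 * (real (n - 1) - 8))) 0 0 0"
      using False by (intro phi_ge8) simp
    also have "175 + 15 * (real (n - 1) - 8) = 15*real n+40" unfolding a1 by simp
    finally show ?thesis unfolding a1 .
  qed
  have e2: "Phi n = Qf (-2/(real n)) (-3/(5*(real n))) (-(15*real n+55)) 0 0 0"
  proof -
    have "Phi n = Qf (- 2 / real n) (- 3 / (5 * real n)) (- (175 + 15 * (real n - 8))) 0 0 0"
      using False by (intro phi_ge8) simp
    also have "175 + 15 * (real n - 8) = 15*real n+55" by simp
    finally show ?thesis .
  qed
  show ?thesis unfolding e1 e2 by (rule tail_step[OF k9])
qed

definition RR :: "(nat \<Rightarrow> real) \<Rightarrow> (nat \<Rightarrow> real) \<Rightarrow> nat \<Rightarrow> real" where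
  "RR a c k = tailA a k + tailC c k"

lemma Fterm_eq:
  "Fterm a c k = Fg (al (real k)) (be (real k)) (ga (real k)) (pp (real k)) (qq (real k)) (rr (real k))
     (a k) (c k) (a (k + 1)) (a (k + 2)) (RR a c k)"
  unfolding Fterm_def Fg_def RR_def coef_defs by (simp add: algebra_simps)

lemma tele1: "(\<lambda>i. 1 / real (i + m + 1) - 1 / real (i + m + 2)) sums (1 / real (m + 1))"
proof -
  have "(\<lambda>i. 1 / real (i + (m + 1))) \<longlonglongrightarrow> 0"
    using LIMSEQ_ignore_initial_segment[OF lim_const_over_n[of "1::real"], of "m+1"] by simp
  from telescope_sums'[OF this] show ?thesis by (simp add: add.assoc)
qed

lemma tele2: "(\<lambda>i. 1 / real (i + m + 1)^2 - 1 / real (i + m + 2)^2) sums (1 / real (m + 1)^2)"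
proof -
  have "(\<lambda>i. 1 / real (i + (m + 1))) \<longlonglongrightarrow> 0"
    using LIMSEQ_ignore_initial_segment[OF lim_const_over_n[of "1::real"], of "m+1"] by simp
  then have "(\<lambda>i. (1 / real (i + (m + 1)))^2) \<longlonglongrightarrow> 0^2" by (rule tendsto_power)
  then have "(\<lambda>i. 1 / real (i + (m + 1))^2) \<longlonglongrightarrow> 0" by (simp add: power_one_over)
  from telescope_sums'[OF this] show ?thesis by (simp add: add.assoc)
qed

lemma tailC_facts:
  assumes B: "\<And>n. 1 \<le> n \<Longrightarrow> \<bar>c n\<bar> \<le> B"
  shows "summable (\<lambda>i. c (i + k + 1) / (real (i + k + 1) * (real (i + k + 1) + 1)))"
    and "\<bar>tailC c k\<bar> \<le> B / real (k + 1)"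
proof -
  define f where "f i = c (i + k + 1) / (real (i + k + 1) * (real (i + k + 1) + 1))" for i
  define g where "g i = B * (1 / real (i + k + 1) - 1 / real (i + k + 2))" for i
  have fg: "\<bar>f i\<bar> \<le> g i" for i
  proof -
    define m where "m = real (i + k + 1)"
    have m: "0 < m" unfolding m_def by simp
    have "real (i + k + 2) = m + 1" unfolding m_def by simp
    then have gi: "g i = B / (m * (m + 1))" unfolding g_def using m by (simp add: field_simps)
    have "\<bar>f i\<bar> = \<bar>c (i + k + 1)\<bar> / (m * (m + 1))" unfolding f_def m_def[symmetric] using m
      by (simp add: abs_mult)
    also have "\<dots> \<le> B / (m * (m + 1))" using B[of "i + k + 1"] m by (intro divide_right_mono) auto
    finally show ?thesis using gi by simp
  qed
  have gs: "g sums (B * (1 / real (k + 1)))" unfolding g_def by (rule sums_mult[OF tele1])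
  then have sg: "summable g" by (rule sums_summable)
  have sfa: "summable (\<lambda>i. \<bar>f i\<bar>)" by (rule summable_comparison_test[OF _ sg]) (use fg in auto)
  then have sf: "summable f" by (rule summable_rabs_cancel)
  then show "summable (\<lambda>i. c (i + k + 1) / (real (i + k + 1) * (real (i + k + 1) + 1)))" unfolding f_def .
  have "\<bar>tailC c k\<bar> = \<bar>suminf f\<bar>" unfolding tailC_def f_def ..
  also have "\<dots> \<le> (\<Sum>i. \<bar>f i\<bar>)" by (rule summable_rabs[OF sfa])
  also have "\<dots> \<le> suminf g" by (rule suminf_le[OF fg sfa sg])
  also have "\<dots> = B / real (k + 1)" using sums_unique[OF gs] by simp
  finally show "\<bar>tailC c k\<bar> \<le> B / real (k + 1)" .
qed

lemma tailA_facts: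
  assumes B: "\<And>n. 1 \<le> n \<Longrightarrow> \<bar>a n\<bar> \<le> B"
  shows "summable (\<lambda>i. a (i + k + 2) * (1 / (real (i + k + 2))^2 - 1 / (real (i + k + 2) - 1)^2))"
    and "\<bar>tailA a k\<bar> \<le> B / real (k + 1)^2"
proof -
  define f where "f i = a (i + k + 2) * (1 / (real (i + k + 2))^2 - 1 / (real (i + k + 2) - 1)^2)" for i
  define g where "g i = B * (1 / real (i + k + 1)^2 - 1 / real (i + k + 2)^2)" for i
  have fg: "\<bar>f i\<bar> \<le> g i" for i
  proof -
    define m where "m = real (i + k + 1)"
    have m: "0 < m" unfolding m_def by simp
    have e2: "real (i + k + 2) = m + 1" unfolding m_def by simp
    have lt: "1 / (m + 1)^2 \<le> 1 / m^2" using m by (intro divide_left_mono power_mono) auto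
    have "\<bar>f i\<bar> = \<bar>a (i + k + 2)\<bar> * (1 / m^2 - 1 / (m + 1)^2)" unfolding f_def e2 using lt
      by (simp add: abs_mult)
    also have "\<dots> \<le> B * (1 / m^2 - 1 / (m + 1)^2)" using B[of "i + k + 2"] lt by (intro mult_right_mono) auto
    finally show ?thesis unfolding g_def m_def[symmetric] e2 .
  qed
  have gs: "g sums (B * (1 / real (k + 1)^2))" unfolding g_def by (rule sums_mult[OF tele2])
  then have sg: "summable g" by (rule sums_summable)
  have sfa: "summable (\<lambda>i. \<bar>f i\<bar>)" by (rule summable_comparison_test[OF _ sg]) (use fg in auto)
  then have sf: "summable f" by (rule summable_rabs_cancel)
  then show "summable (\<lambda>i. a (i + k + 2) * (1 / (real (i + k + 2))^2 - 1 / (real (i + k + 2) - 1)^2))" unfolding f_def .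
  have "\<bar>tailA a k\<bar> = \<bar>suminf f\<bar>" unfolding tailA_def f_def ..
  also have "\<dots> \<le> (\<Sum>i. \<bar>f i\<bar>)" by (rule summable_rabs[OF sfa])
  also have "\<dots> \<le> suminf g" by (rule suminf_le[OF fg sfa sg])
  also have "\<dots> = B / real (k + 1)^2" using sums_unique[OF gs] by simp
  finally show "\<bar>tailA a k\<bar> \<le> B / real (k + 1)^2" .
qed

lemma tailC_rec:
  assumes "summable (\<lambda>i. c (i + k + 1) / (real (i + k + 1) * (real (i + k + 1) + 1)))"
  shows "tailC c k = c (k + 1) / (real (k + 1) * (real (k + 1) + 1)) + tailC c (k + 1)"
proof -
  have "tailC c (k + 1) = (\<Sum>i. c (Suc i + k + 1) / (real (Suc i + k + 1) * (real (Suc i + k + 1) + 1)))"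
    unfolding tailC_def by (simp add: algebra_simps)
  also have "\<dots> = tailC c k - c (k + 1) / (real (k + 1) * (real (k + 1) + 1))"
    unfolding tailC_def using suminf_split_head[OF assms] by simp
  finally show ?thesis by simp
qed

lemma tailA_rec:
  assumes "summable (\<lambda>i. a (i + k + 2) * (1 / (real (i + k + 2))^2 - 1 / (real (i + k + 2) - 1)^2))"
  shows "tailA a k = a (k + 2) * (1 / (real (k + 2))^2 - 1 / (real (k + 2) - 1)^2) + tailA a (k + 1)"
proof -
  have "tailA a (k + 1) = (\<Sum>i. a (Suc i + k + 2) * (1 / (real (Suc i + k + 2))^2 - 1 / (real (Suc i + k + 2) - 1)^2))"
    unfolding tailA_def by (simp add: algebra_simps)
  also have "\<dots> = tailA a k - a (k + 2) * (1 / (real (k + 2))^2 - 1 / (real (k + 2) - 1)^2)"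
    unfolding tailA_def using suminf_split_head[OF assms] by simp
  finally show ?thesis by simp
qed

lemma cb_c1:
  fixes k :: real assumes "2 \<le> k"
  shows "pp k \<le> 1"
proof -
  define t where "t = k - 2"
  have t: "0 \<le> t" "k = t + 2" using assms by (simp_all add: t_def)
  have nz: "k \<noteq> 0" "k + 1 \<noteq> 0" "k - 1 \<noteq> 0" "1 + k \<noteq> 0" using assms by auto
  have e: "(1) - (pp k) = ((23/2) * t^0 + (17) * t^1 + (15/2) * t^2 + (1) * t^3) / (k^2 * (k+1)^1)"
    unfolding t_def using nz by (simp add: coef_defs divide_simps; simp add: algebra_simps eval_nat_numeral)
  have "0 \<le> (23/2) * t^0 + (17) * t^1 + (15/2) * t^2 + (1) * t^3" using t(1) by (intro add_nonneg_nonneg mult_nonneg_nonneg zero_le_power) simp_all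
  moreover have "0 < k^2 * (k+1)^1" using assms by simp
  ultimately have "0 \<le> ((23/2) * t^0 + (17) * t^1 + (15/2) * t^2 + (1) * t^3) / (k^2 * (k+1)^1)" by simp
  then show ?thesis using e by simp
qed

lemma cb_c2:
  fixes k :: real assumes "2 \<le> k"
  shows "-1 \<le> pp k"
proof -
  define t where "t = k - 2"
  have t: "0 \<le> t" "k = t + 2" using assms by (simp_all add: t_def)
  have nz: "k \<noteq> 0" "k + 1 \<noteq> 0" "k - 1 \<noteq> 0" "1 + k \<noteq> 0" using assms by auto
  have e: "(pp k) - (-1) = ((25/2) * t^0 + (15) * t^1 + (13/2) * t^2 + (1) * t^3) / (k^2 * (k+1)^1)"
    unfolding t_def using nz by (simp add: coef_defs divide_simps; simp add: algebra_simps eval_nat_numeral)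
  have "0 \<le> (25/2) * t^0 + (15) * t^1 + (13/2) * t^2 + (1) * t^3" using t(1) by (intro add_nonneg_nonneg mult_nonneg_nonneg zero_le_power) simp_all
  moreover have "0 < k^2 * (k+1)^1" using assms by simp
  ultimately have "0 \<le> ((25/2) * t^0 + (15) * t^1 + (13/2) * t^2 + (1) * t^3) / (k^2 * (k+1)^1)" by simp
  then show ?thesis using e by simp
qed

lemma cb_c3:
  fixes k :: real assumes "2 \<le> k"
  shows "qq k \<le> 1"
proof -
  define t where "t = k - 2"
  have t: "0 \<le> t" "k = t + 2" using assms by (simp_all add: t_def)
  have nz: "k \<noteq> 0" "k + 1 \<noteq> 0" "k - 1 \<noteq> 0" "1 + k \<noteq> 0" using assms by auto
  have e: "(1) - (qq k) = ((71/2) * t^0 + (117/2) * t^1 + (73/2) * t^2 + (10) * t^3 + (1) * t^4) / (k^2 * (k+1)^2)"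
    unfolding t_def using nz by (simp add: coef_defs divide_simps; simp add: algebra_simps eval_nat_numeral)
  have "0 \<le> (71/2) * t^0 + (117/2) * t^1 + (73/2) * t^2 + (10) * t^3 + (1) * t^4" using t(1) by (intro add_nonneg_nonneg mult_nonneg_nonneg zero_le_power) simp_all
  moreover have "0 < k^2 * (k+1)^2" using assms by simp
  ultimately have "0 \<le> ((71/2) * t^0 + (117/2) * t^1 + (73/2) * t^2 + (10) * t^3 + (1) * t^4) / (k^2 * (k+1)^2)" by simp
  then show ?thesis using e by simp
qed

lemma cb_c4:
  fixes k :: real assumes "2 \<le> k"
  shows "-1 \<le> qq k"
proof -
  define t where "t = k - 2"
  have t: "0 \<le> t" "k = t + 2" using assms by (simp_all add: t_def)
  have nz: "k \<noteq> 0" "k + 1 \<noteq> 0" "k - 1 \<noteq> 0" "1 + k \<noteq> 0" using assms by auto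
  have e: "(qq k) - (-1) = ((73/2) * t^0 + (123/2) * t^1 + (75/2) * t^2 + (10) * t^3 + (1) * t^4) / (k^2 * (k+1)^2)"
    unfolding t_def using nz by (simp add: coef_defs divide_simps; simp add: algebra_simps eval_nat_numeral)
  have "0 \<le> (73/2) * t^0 + (123/2) * t^1 + (75/2) * t^2 + (10) * t^3 + (1) * t^4" using t(1) by (intro add_nonneg_nonneg mult_nonneg_nonneg zero_le_power) simp_all
  moreover have "0 < k^2 * (k+1)^2" using assms by simp
  ultimately have "0 \<le> ((73/2) * t^0 + (123/2) * t^1 + (75/2) * t^2 + (10) * t^3 + (1) * t^4) / (k^2 * (k+1)^2)" by simp
  then show ?thesis using e by simp
qed

lemma cb_c5:
  fixes k :: real assumes "2 \<le> k"
  shows "rr k \<le> 1"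
proof -
  define t where "t = k - 2"
  have t: "0 \<le> t" "k = t + 2" using assms by (simp_all add: t_def)
  have nz: "k \<noteq> 0" "k + 1 \<noteq> 0" "k - 1 \<noteq> 0" "1 + k \<noteq> 0" using assms by auto
  have e: "(1) - (rr k) = ((7) * t^0 + (11/2) * t^1 + (1) * t^2) / ((k+1)^2)"
    unfolding t_def using nz by (simp add: coef_defs divide_simps; simp add: algebra_simps eval_nat_numeral)
  have "0 \<le> (7) * t^0 + (11/2) * t^1 + (1) * t^2" using t(1) by (intro add_nonneg_nonneg mult_nonneg_nonneg zero_le_power) simp_all
  moreover have "0 < (k+1)^2" using assms by simp
  ultimately have "0 \<le> ((7) * t^0 + (11/2) * t^1 + (1) * t^2) / ((k+1)^2)" by simp
  then show ?thesis using e by simp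
qed

lemma cb_c6:
  fixes k :: real assumes "2 \<le> k"
  shows "-1 \<le> rr k"
proof -
  define t where "t = k - 2"
  have t: "0 \<le> t" "k = t + 2" using assms by (simp_all add: t_def)
  have nz: "k \<noteq> 0" "k + 1 \<noteq> 0" "k - 1 \<noteq> 0" "1 + k \<noteq> 0" using assms by auto
  have e: "(rr k) - (-1) = ((11) * t^0 + (13/2) * t^1 + (1) * t^2) / ((k+1)^2)"
    unfolding t_def using nz by (simp add: coef_defs divide_simps; simp add: algebra_simps eval_nat_numeral)
  have "0 \<le> (11) * t^0 + (13/2) * t^1 + (1) * t^2" using t(1) by (intro add_nonneg_nonneg mult_nonneg_nonneg zero_le_power) simp_all
  moreover have "0 < (k+1)^2" using assms by simp
  ultimately have "0 \<le> ((11) * t^0 + (13/2) * t^1 + (1) * t^2) / ((k+1)^2)" by simp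
  then show ?thesis using e by simp
qed

lemma cb_c7:
  fixes k :: real assumes "2 \<le> k"
  shows "al k \<le> 2"
proof -
  define t where "t = k - 2"
  have t: "0 \<le> t" "k = t + 2" using assms by (simp_all add: t_def)
  have nz: "k \<noteq> 0" "k + 1 \<noteq> 0" "k - 1 \<noteq> 0" "1 + k \<noteq> 0" using assms by auto
  have e: "(2) - (al k) = ((191/25) * t^0 + (398/25) * t^1 + (377/25) * t^2 + (174/25) * t^3 + (29/25) * t^4) / (k^2 * (k-1)^2)"
    unfolding t_def using nz by (simp add: coef_defs divide_simps; simp add: algebra_simps eval_nat_numeral)
  have "0 \<le> (191/25) * t^0 + (398/25) * t^1 + (377/25) * t^2 + (174/25) * t^3 + (29/25) * t^4" using t(1) by (intro add_nonneg_nonneg mult_nonneg_nonneg zero_le_power) simp_all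
  moreover have "0 < k^2 * (k-1)^2" using assms by simp
  ultimately have "0 \<le> ((191/25) * t^0 + (398/25) * t^1 + (377/25) * t^2 + (174/25) * t^3 + (29/25) * t^4) / (k^2 * (k-1)^2)" by simp
  then show ?thesis using e by simp
qed

lemma cb_c8:
  fixes k :: real assumes "2 \<le> k"
  shows "-2 \<le> al k"
proof -
  define t where "t = k - 2"
  have t: "0 \<le> t" "k = t + 2" using assms by (simp_all add: t_def)
  have nz: "k \<noteq> 0" "k + 1 \<noteq> 0" "k - 1 \<noteq> 0" "1 + k \<noteq> 0" using assms by auto
  have e: "(al k) - (-2) = ((209/25) * t^0 + (802/25) * t^1 + (923/25) * t^2 + (426/25) * t^3 + (71/25) * t^4) / (k^2 * (k-1)^2)"
    unfolding t_def using nz by (simp add: coef_defs divide_simps; simp add: algebra_simps eval_nat_numeral)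
  have "0 \<le> (209/25) * t^0 + (802/25) * t^1 + (923/25) * t^2 + (426/25) * t^3 + (71/25) * t^4" using t(1) by (intro add_nonneg_nonneg mult_nonneg_nonneg zero_le_power) simp_all
  moreover have "0 < k^2 * (k-1)^2" using assms by simp
  ultimately have "0 \<le> ((209/25) * t^0 + (802/25) * t^1 + (923/25) * t^2 + (426/25) * t^3 + (71/25) * t^4) / (k^2 * (k-1)^2)" by simp
  then show ?thesis using e by simp
qed

lemma cb_c9:
  fixes k :: real assumes "2 \<le> k"
  shows "be k \<le> 2"
proof -
  define t where "t = k - 2"
  have t: "0 \<le> t" "k = t + 2" using assms by (simp_all add: t_def)
  have nz: "k \<noteq> 0" "k + 1 \<noteq> 0" "k - 1 \<noteq> 0" "1 + k \<noteq> 0" using assms by auto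
  have e: "(2) - (be k) = ((149/25) * t^0 + (29/5) * t^1 + (29/25) * t^2) / (k^1 * (k+1)^1)"
    unfolding t_def using nz by (simp add: coef_defs divide_simps; simp add: algebra_simps eval_nat_numeral)
  have "0 \<le> (149/25) * t^0 + (29/5) * t^1 + (29/25) * t^2" using t(1) by (intro add_nonneg_nonneg mult_nonneg_nonneg zero_le_power) simp_all
  moreover have "0 < k^1 * (k+1)^1" using assms by simp
  ultimately have "0 \<le> ((149/25) * t^0 + (29/5) * t^1 + (29/25) * t^2) / (k^1 * (k+1)^1)" by simp
  then show ?thesis using e by simp
qed

lemma cb_c10:
  fixes k :: real assumes "2 \<le> k"
  shows "-2 \<le> be k"
proof -
  define t where "t = k - 2"
  have t: "0 \<le> t" "k = t + 2" using assms by (simp_all add: t_def)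
  have nz: "k \<noteq> 0" "k + 1 \<noteq> 0" "k - 1 \<noteq> 0" "1 + k \<noteq> 0" using assms by auto
  have e: "(be k) - (-2) = ((451/25) * t^0 + (71/5) * t^1 + (71/25) * t^2) / (k^1 * (k+1)^1)"
    unfolding t_def using nz by (simp add: coef_defs divide_simps; simp add: algebra_simps eval_nat_numeral)
  have "0 \<le> (451/25) * t^0 + (71/5) * t^1 + (71/25) * t^2" using t(1) by (intro add_nonneg_nonneg mult_nonneg_nonneg zero_le_power) simp_all
  moreover have "0 < k^1 * (k+1)^1" using assms by simp
  ultimately have "0 \<le> ((451/25) * t^0 + (71/5) * t^1 + (71/25) * t^2) / (k^1 * (k+1)^1)" by simp
  then show ?thesis using e by simp
qed

lemma cb_c11:
  fixes k :: real assumes "2 \<le> k"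
  shows "ga k \<le> 1"
proof -
  define t where "t = k - 2"
  have t: "0 \<le> t" "k = t + 2" using assms by (simp_all add: t_def)
  have nz: "k \<noteq> 0" "k + 1 \<noteq> 0" "k - 1 \<noteq> 0" "1 + k \<noteq> 0" using assms by auto
  have e: "(1) - (ga k) = ((8) * t^0 + (6) * t^1 + (1) * t^2) / ((k+1)^2)"
    unfolding t_def using nz by (simp add: coef_defs divide_simps; simp add: algebra_simps eval_nat_numeral)
  have "0 \<le> (8) * t^0 + (6) * t^1 + (1) * t^2" using t(1) by (intro add_nonneg_nonneg mult_nonneg_nonneg zero_le_power) simp_all
  moreover have "0 < (k+1)^2" using assms by simp
  ultimately have "0 \<le> ((8) * t^0 + (6) * t^1 + (1) * t^2) / ((k+1)^2)" by simp
  then show ?thesis using e by simp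
qed

lemma cb_c12:
  fixes k :: real assumes "2 \<le> k"
  shows "-1 \<le> ga k"
proof -
  define t where "t = k - 2"
  have t: "0 \<le> t" "k = t + 2" using assms by (simp_all add: t_def)
  have nz: "k \<noteq> 0" "k + 1 \<noteq> 0" "k - 1 \<noteq> 0" "1 + k \<noteq> 0" using assms by auto
  have e: "(ga k) - (-1) = ((10) * t^0 + (6) * t^1 + (1) * t^2) / ((k+1)^2)"
    unfolding t_def using nz by (simp add: coef_defs divide_simps; simp add: algebra_simps eval_nat_numeral)
  have "0 \<le> (10) * t^0 + (6) * t^1 + (1) * t^2" using t(1) by (intro add_nonneg_nonneg mult_nonneg_nonneg zero_le_power) simp_all
  moreover have "0 < (k+1)^2" using assms by simp
  ultimately have "0 \<le> ((10) * t^0 + (6) * t^1 + (1) * t^2) / ((k+1)^2)" by simp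
  then show ?thesis using e by simp
qed


lemma pb2: assumes "\<bar>m::real\<bar> \<le> 1" shows "\<bar>2*m*x*y\<bar> \<le> x^2 + y^2"
proof -
  have h1: "- (\<bar>m\<bar> * (x^2 + y^2)) \<le> 2*m*x*y" by (rule pair_bound)
  have h2: "- (\<bar>-m\<bar> * (x^2 + y^2)) \<le> 2*(-m)*x*y" by (rule pair_bound)
  have h3: "\<bar>m\<bar> * (x^2 + y^2) \<le> 1 * (x^2 + y^2)" using assms by (intro mult_right_mono) auto
  show ?thesis using h1 h2 h3 by (simp add: abs_le_iff)
qed

lemma pb1: assumes "\<bar>m::real\<bar> \<le> 2" shows "\<bar>m*x^2\<bar> \<le> 2*x^2"
proof -
  have "\<bar>m*x^2\<bar> = \<bar>m\<bar> * x^2" by (simp add: abs_mult)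
  also have "\<dots> \<le> 2 * x^2" using assms by (intro mult_right_mono) auto
  finally show ?thesis .
qed

lemma Fg_bound:
  assumes "\<bar>a0\<bar> \<le> 2" "\<bar>b0\<bar> \<le> 2" "\<bar>g0\<bar> \<le> 1" "\<bar>p\<bar> \<le> 1" "\<bar>q\<bar> \<le> 1" "\<bar>r\<bar> \<le> 1"
  shows "\<bar>Fg a0 b0 g0 p q r x0 x1 x2 x3 x4\<bar> \<le> 5 * (x0^2 + x1^2 + x2^2 + x3^2 + x4^2)"
proof -
  have h1: "\<bar>a0*x0^2\<bar> \<le> 2*x0^2" using assms(1) by (rule pb1)
  have h2: "\<bar>b0*x1^2\<bar> \<le> 2*x1^2" using assms(2) by (rule pb1)
  have h3: "\<bar>2*g0*x0*x2\<bar> \<le> x0^2 + x2^2" using assms(3) by (rule pb2)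
  have h4: "\<bar>2*1*x0*x4\<bar> \<le> x0^2 + x4^2" by (rule pb2) simp
  have h5: "\<bar>2*p*x0*x1\<bar> \<le> x0^2 + x1^2" using assms(4) by (rule pb2)
  have h6: "\<bar>2*q*x2*x1\<bar> \<le> x2^2 + x1^2" using assms(5) by (rule pb2)
  have h7: "\<bar>2*r*x3*x1\<bar> \<le> x3^2 + x1^2" using assms(6) by (rule pb2)
  have h4': "\<bar>2*x0*x4\<bar> \<le> x0^2 + x4^2" using h4 by simp
  have u: "Fg a0 b0 g0 p q r x0 x1 x2 x3 x4 \<le> 5 * (x0^2 + x1^2 + x2^2 + x3^2 + x4^2)"
    unfolding Fg_def using h1[THEN abs_le_D1] h2[THEN abs_le_D1] h3[THEN abs_le_D1] h4'[THEN abs_le_D1] h5[THEN abs_le_D1] h6[THEN abs_le_D1] h7[THEN abs_le_D1] h1[THEN abs_le_D2] h2[THEN abs_le_D2] h3[THEN abs_le_D2] h4'[THEN abs_le_D2] h5[THEN abs_le_D2] h6[THEN abs_le_D2] h7[THEN abs_le_D2] zero_le_power2[of x2] zero_le_power2[of x3] zero_le_power2[of x4] by (smt (verit))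
  have l: "- Fg a0 b0 g0 p q r x0 x1 x2 x3 x4 \<le> 5 * (x0^2 + x1^2 + x2^2 + x3^2 + x4^2)"
    unfolding Fg_def using h1[THEN abs_le_D1] h2[THEN abs_le_D1] h3[THEN abs_le_D1] h4'[THEN abs_le_D1] h5[THEN abs_le_D1] h6[THEN abs_le_D1] h7[THEN abs_le_D1] h1[THEN abs_le_D2] h2[THEN abs_le_D2] h3[THEN abs_le_D2] h4'[THEN abs_le_D2] h5[THEN abs_le_D2] h6[THEN abs_le_D2] h7[THEN abs_le_D2] zero_le_power2[of x2] zero_le_power2[of x3] zero_le_power2[of x4] by (smt (verit))
  show ?thesis using u l by (simp add: abs_le_iff)
qed

lemma helper55: "(m::real) > 0 \<Longrightarrow> (55 * m) * (2 * B / m)^2 = 220 * B^2 / m"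
  by (simp add: power2_eq_square field_simps)

theorem mainTheorem15:
  fixes a c :: "nat \<Rightarrow> real"
  assumes "summable (\<lambda>k. (a (k + 1))^2 + (c (k + 1))^2)"
  shows "summable (\<lambda>k. Fterm a c (k + 1)) \<and> 0 \<le> (\<Sum>k. Fterm a c (k + 1))"
proof -
  define S where "S = (\<Sum>k. (a (k + 1))^2 + (c (k + 1))^2)"
  define B where "B = 1 + S"
  have sq: "(a n)^2 + (c n)^2 \<le> S" if "1 \<le> n" for n
  proof -
    have "(\<Sum>k\<in>{n - 1}. (a (k + 1))^2 + (c (k + 1))^2) \<le> S"
      unfolding S_def by (rule sum_le_suminf[OF assms]) auto
    then show ?thesis using that by simp
  qed
  have absle: "\<bar>x\<bar> \<le> 1 + x^2" for x :: real
  proof -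
    have "0 \<le> (\<bar>x\<bar> - 1/2)^2" by simp
    then show ?thesis by (simp add: power2_eq_square algebra_simps)
  qed
  have Ba: "\<bar>a n\<bar> \<le> B" if "1 \<le> n" for n
    using absle[of "a n"] sq[OF that] unfolding B_def by (smt (verit) zero_le_power2)
  have Bc: "\<bar>c n\<bar> \<le> B" if "1 \<le> n" for n
    using absle[of "c n"] sq[OF that] unfolding B_def by (smt (verit) zero_le_power2)
  have B0: "0 \<le> B" using Ba[of 1] by simp
  note tC = tailC_facts[of c B, OF Bc]
  note tA = tailA_facts[of a B, OF Ba]
  have Rbound: "\<bar>RR a c k\<bar> \<le> 2 * B / real (k + 1)" for k
  proof -
    have "B / real (k + 1)^2 \<le> B / real (k + 1)"
      using B0 by (intro divide_left_mono) (auto simp: power2_eq_square)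
    then show ?thesis unfolding RR_def using tA(2)[of k] tC(2)[of k] by (simp add: abs_le_iff)
  qed
  have Rrec: "RR a c (n - 1) = RR a c n + ww (real n) * c n + dd (real n) * a (n + 1)" if "1 \<le> n" for n
  proof -
    define k where "k = n - 1"
    have k: "n = k + 1" using that unfolding k_def by simp
    have d1: "1 / (real (k + 2))^2 - 1 / (real (k + 2) - 1)^2 = dd (real (k + 1))"
      unfolding dd_def by (simp add: algebra_simps)
    have w1: "c (k + 1) / (real (k + 1) * (real (k + 1) + 1)) = ww (real (k + 1)) * c (k + 1)"
      unfolding ww_def by simp
    have eC: "tailC c k = ww (real (k + 1)) * c (k + 1) + tailC c (k + 1)"
      using tailC_rec[OF tC(1)[of k]] w1 by simp
    have eA: "tailA a k = dd (real (k + 1)) * a (k + 2) + tailA a (k + 1)"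
      using tailA_rec[OF tA(1)[of k]] d1 by (simp add: mult.commute)
    have "RR a c k = RR a c (k + 1) + ww (real (k + 1)) * c (k + 1) + dd (real (k + 1)) * a (k + 2)"
      unfolding RR_def eC eA by simp
    then show ?thesis using k by simp
  qed
  define Sm where "Sm N = (\<Sum>k<N. Fterm a c (k + 1))" for N
  have tele: "Phi N (a (N + 1)) (a (N + 2)) (RR a c N) \<le> Sm N" for N
  proof (induction N)
    case 0
    then show ?case unfolding Sm_def phi_0 Qf_def by simp
  next
    case (Suc N)
    have st: "0 \<le> Fterm a c (Suc N) + Phi (Suc N - 1) (a (Suc N)) (a (Suc N + 1))
        (RR a c (Suc N) + ww (real (Suc N)) * c (Suc N) + dd (real (Suc N)) * a (Suc N + 1))
        - Phi (Suc N) (a (Suc N + 1)) (a (Suc N + 2)) (RR a c (Suc N))"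
      unfolding Fterm_eq by (rule step_all) simp
    have "RR a c N = RR a c (Suc N) + ww (real (Suc N)) * c (Suc N) + dd (real (Suc N)) * a (Suc N + 1)"
      using Rrec[of "Suc N"] by simp
    then have st': "0 \<le> Fterm a c (Suc N) + Phi N (a (N + 1)) (a (N + 2)) (RR a c N)
        - Phi (Suc N) (a (Suc N + 1)) (a (Suc N + 2)) (RR a c (Suc N))"
      using st by simp
    have "Sm (Suc N) = Sm N + Fterm a c (Suc N)" unfolding Sm_def by simp
    then show ?case using st' Suc.IH by simp
  qed
  have sa: "summable (\<lambda>k. (a (k + 1))^2)"
    by (rule summable_comparison_test[OF _ assms]) auto
  have sc: "summable (\<lambda>k. (c (k + 1))^2)"
    by (rule summable_comparison_test[OF _ assms]) auto
  have sa2: "summable (\<lambda>k. (a (k + 2))^2)"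
    using summable_iff_shift[of "\<lambda>k. (a (k + 1))^2" 1] sa by (simp add: add.assoc)
  have sa3: "summable (\<lambda>k. (a (k + 3))^2)"
    using summable_iff_shift[of "\<lambda>k. (a (k + 1))^2" 2] sa by (simp add: add.assoc eval_nat_numeral)
  have sinv: "summable (\<lambda>k. 4 * B^2 * (1 / real (k + 1) - 1 / real (k + 2)))"
    using sums_summable[OF sums_mult[OF tele1[of 0]], of "4 * B^2"] by simp
  have Rsq: "(RR a c (k + 1))^2 \<le> 4 * B^2 * (1 / real (k + 1) - 1 / real (k + 2))" for k
  proof -
    have "(RR a c (k + 1))^2 = \<bar>RR a c (k + 1)\<bar>^2" by simp
    also have "\<dots> \<le> (2 * B / real (k + 2))^2"
      using Rbound[of "k + 1"] by (intro power_mono) (auto simp: add.assoc)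
    also have "\<dots> = 4 * B^2 / (real (k + 2))^2" by (simp add: power_divide power_mult_distrib)
    also have "\<dots> \<le> 4 * B^2 * (1 / real (k + 1) - 1 / real (k + 2))"
    proof -
      have q1: "1 / real (k + 1) - 1 / real (k + 2) = 1 / (real (k + 1) * real (k + 2))"
        by (simp add: field_simps)
      have q2: "real (k + 1) * real (k + 2) \<le> (real (k + 2))^2"
        unfolding power2_eq_square by (intro mult_right_mono) auto
      have "1 / (real (k + 2))^2 \<le> 1 / (real (k + 1) * real (k + 2))"
        by (rule divide_left_mono[OF q2]) auto
      then have "1 / (real (k + 2))^2 \<le> 1 / real (k + 1) - 1 / real (k + 2)" unfolding q1 .
      then show ?thesis using mult_left_mono[of _ _ "4 * B^2"] by (simp add: divide_simps)
    qed
    finally show ?thesis .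
  qed
  have sR: "summable (\<lambda>k. (RR a c (k + 1))^2)"
    by (rule summable_comparison_test[OF _ sinv]) (use Rsq in auto)
  have sF: "summable (\<lambda>k. Fterm a c (k + 1))"
  proof (rule summable_comparison_test)
    show "summable (\<lambda>k. 5 * ((a (k + 1))^2 + (c (k + 1))^2 + (a (k + 2))^2 + (a (k + 3))^2 + (RR a c (k + 1))^2))"
      by (intro summable_mult summable_add sa sc sa2 sa3 sR)
    show "\<exists>N. \<forall>n\<ge>N. norm (Fterm a c (n + 1)) \<le> 5 * ((a (n + 1))^2 + (c (n + 1))^2 + (a (n + 2))^2 + (a (n + 3))^2 + (RR a c (n + 1))^2)"
    proof (intro exI allI impI)
      fix n :: nat assume "1 \<le> n"
      then have k2: "2 \<le> real (n + 1)" by simp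
      have "\<bar>Fterm a c (n + 1)\<bar> \<le> 5 * ((a (n + 1))^2 + (c (n + 1))^2 + (a (n + 1 + 1))^2 + (a (n + 1 + 2))^2 + (RR a c (n + 1))^2)"
        unfolding Fterm_eq
        by (rule Fg_bound) (use cb_c1[OF k2] cb_c2[OF k2] cb_c3[OF k2] cb_c4[OF k2] cb_c5[OF k2] cb_c6[OF k2]
            cb_c7[OF k2] cb_c8[OF k2] cb_c9[OF k2] cb_c10[OF k2] cb_c11[OF k2] cb_c12[OF k2] in \<open>simp_all add: abs_le_iff\<close>)
      then show "norm (Fterm a c (n + 1)) \<le> 5 * ((a (n + 1))^2 + (c (n + 1))^2 + (a (n + 2))^2 + (a (n + 3))^2 + (RR a c (n + 1))^2)"
        by (simp add: add.assoc eval_nat_numeral)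
    qed
  qed
  define E where "E N = 2 * (a (N + 1))^2 + (a (N + 2))^2 + 220 * B^2 / real (N + 1)" for N
  have lowE: "- E N \<le> Sm N" if "8 \<le> N" for N
  proof -
    have ph: "Phi N (a (N + 1)) (a (N + 2)) (RR a c N) =
       - 2 / real N * (a (N + 1))^2 - 3 / (5 * real N) * (a (N + 2))^2 - (175 + 15 * (real N - 8)) * (RR a c N)^2"
      unfolding phi_ge8[OF that] Qf_def by (simp add: algebra_simps)
    have N1: "1 \<le> real N" using that by simp
    have t1: "2 / real N * (a (N + 1))^2 \<le> 2 * (a (N + 1))^2"
      using N1 by (intro mult_right_mono) (auto simp: divide_simps)
    have t2: "3 / (5 * real N) * (a (N + 2))^2 \<le> (a (N + 2))^2"
    proof -
      have "3 / (5 * real N) \<le> 1" using N1 by (simp add: divide_simps)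
      then have "3 / (5 * real N) * (a (N + 2))^2 \<le> 1 * (a (N + 2))^2" by (intro mult_right_mono) auto
      then show ?thesis by simp
    qed
    have t3: "(175 + 15 * (real N - 8)) * (RR a c N)^2 \<le> 220 * B^2 / real (N + 1)"
    proof -
      have r2: "(RR a c N)^2 \<le> (2 * B / real (N + 1))^2"
        using Rbound[of N] by (metis abs_ge_zero power2_abs power_mono)
      have "(175 + 15 * (real N - 8)) * (RR a c N)^2 \<le> (55 * real (N + 1)) * (2 * B / real (N + 1))^2"
        using r2 N1 by (intro mult_mono) auto
      also have "\<dots> = 220 * B^2 / real (N + 1)" by (rule helper55) simp
      finally show ?thesis .
    qed
    show ?thesis using tele[of N] ph t1 t2 t3 unfolding E_def by linarith
  qed
  have Elim: "E \<longlonglongrightarrow> 0"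
  proof -
    have l1: "(\<lambda>N. (a (N + 1))^2) \<longlonglongrightarrow> 0" by (rule summable_LIMSEQ_zero[OF sa])
    have l2: "(\<lambda>N. (a (N + 2))^2) \<longlonglongrightarrow> 0" by (rule summable_LIMSEQ_zero[OF sa2])
    have l3: "(\<lambda>N. (220 * B^2) / real (N + 1)) \<longlonglongrightarrow> 0"
      using LIMSEQ_ignore_initial_segment[OF lim_const_over_n[of "220 * B^2"], of 1] by simp
    have "(\<lambda>N. 2 * (a (N + 1))^2 + (a (N + 2))^2 + 220 * B^2 / real (N + 1)) \<longlonglongrightarrow> 2 * 0 + 0 + 0"
      by (intro tendsto_add tendsto_mult_left l1 l2 l3)
    then show ?thesis unfolding E_def by simp
  qed
  have "- 0 \<le> suminf (\<lambda>k. Fterm a c (k + 1))"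
  proof (rule LIMSEQ_le)
    show "(\<lambda>N. - E N) \<longlonglongrightarrow> - 0" by (intro tendsto_minus Elim)
    show "Sm \<longlonglongrightarrow> suminf (\<lambda>k. Fterm a c (k + 1))" unfolding Sm_def by (rule summable_LIMSEQ[OF sF])
    show "\<exists>N. \<forall>n\<ge>N. - E n \<le> Sm n" using lowE by blast
  qed
  then show ?thesis using sF by simp
qed

end
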